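(* Let $X$ be a T$_D$ space. Then the McKinsey scheme $\mathrm{M}:\ \Box\Diamond\varphi\to\Diamond\Box\varphi$ is $d$-valid in $X$ if and only if $X$ is crowded and openly irresolvable. Consequently, if $X$ is T$_D$ and crowded, then the following are equivalent: $\mathrm{M}$ is $d$-valid in $X$; $X$ is openly irresolvable; $\mathrm{M}$ is $C$-valid in $X$.
   Context: Topological models on a space $X$ are valuations of propositional variables by subsets of $X$, with Boolean connectives interpreted as set operations and $\Box=\neg\Diamond\neg$. In $d$-semantics, $\Diamond\varphi$ is interpreted as the derived set $\mathrm{d}_X$ (set of limit points: $x$ such that every $O-\{x\}$, $O$ an open neighbourhood of $x$, meets the set) of the truth set of $\varphi$; in $C$-semantics, $\Diamond\varphi$ is interpreted as the closure of the truth set of $\varphi$ (so $\Box$ is interior). A scheme is $d$-valid (resp. $C$-valid) in $X$ if all its instances are true at all points of all models on $X$ under $d$-semantics (resp. $C$-semantics). $X$ is T$_D$ if $\mathrm{d}_X\{x\}$ is closed for all $x$; crowded if it has no isolated points. A space is irresolvable if it has no two disjoint non-empty dense subsets; $X$ is openly irresolvable if every non-empty open subspace is irresolvable. *)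

theory Defs
  imports "HOL-Analysis.Analysis"
begin

datatype fm = Var nat | Bot | Neg fm | Conj fm fm | Disj fm fm | Imp fm fm | Dia fm

definition Box :: "fm \<Rightarrow> fm" where "Box \<phi> = Neg (Dia (Neg \<phi>))"

definition McKinsey :: "fm \<Rightarrow> fm" where
  "McKinsey \<phi> = Imp (Box (Dia \<phi>)) (Dia (Box \<phi>))"

text \<open>Truth sets; the parameter D interprets the diamond (derived set or closure).\<close>
fun tsem :: "'a set \<Rightarrow> ('a set \<Rightarrow> 'a set) \<Rightarrow> (nat \<Rightarrow> 'a set) \<Rightarrow> fm \<Rightarrow> 'a set" where
  "tsem S D V (Var p) = V p"
| "tsem S D V Bot = {}"
| "tsem S D V (Neg \<phi>) = S - tsem S D V \<phi>"
| "tsem S D V (Conj \<phi> \<psi>) = tsem S D V \<phi> \<inter> tsem S D V \<psi>"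
| "tsem S D V (Disj \<phi> \<psi>) = tsem S D V \<phi> \<union> tsem S D V \<psi>"
| "tsem S D V (Imp \<phi> \<psi>) = (S - tsem S D V \<phi>) \<union> tsem S D V \<psi>"
| "tsem S D V (Dia \<phi>) = D (tsem S D V \<phi>)"

definition d_sem :: "'a topology \<Rightarrow> (nat \<Rightarrow> 'a set) \<Rightarrow> fm \<Rightarrow> 'a set" where
  "d_sem X V \<phi> = tsem (topspace X) (\<lambda>A. X derived_set_of A) V \<phi>"

definition C_sem :: "'a topology \<Rightarrow> (nat \<Rightarrow> 'a set) \<Rightarrow> fm \<Rightarrow> 'a set" where
  "C_sem X V \<phi> = tsem (topspace X) (\<lambda>A. X closure_of A) V \<phi>"

definition valuation :: "'a topology \<Rightarrow> (nat \<Rightarrow> 'a set) \<Rightarrow> bool" where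
  "valuation X V \<longleftrightarrow> (\<forall>p. V p \<subseteq> topspace X)"

definition M_d_valid :: "'a topology \<Rightarrow> bool" where
  "M_d_valid X \<longleftrightarrow> (\<forall>V \<phi>. valuation X V \<longrightarrow> d_sem X V (McKinsey \<phi>) = topspace X)"

definition M_C_valid :: "'a topology \<Rightarrow> bool" where
  "M_C_valid X \<longleftrightarrow> (\<forall>V \<phi>. valuation X V \<longrightarrow> C_sem X V (McKinsey \<phi>) = topspace X)"

definition T_D :: "'a topology \<Rightarrow> bool" where
  "T_D X \<longleftrightarrow> (\<forall>x \<in> topspace X. closedin X (X derived_set_of {x}))"

definition crowded :: "'a topology \<Rightarrow> bool" where
  "crowded X \<longleftrightarrow> (\<forall>x \<in> topspace X. \<not> openin X {x})"

definition irresolvable :: "'a topology \<Rightarrow> bool" where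
  "irresolvable X \<longleftrightarrow> \<not> (\<exists>A B. A \<subseteq> topspace X \<and> B \<subseteq> topspace X \<and> A \<inter> B = {} \<and>
      A \<noteq> {} \<and> B \<noteq> {} \<and> X closure_of A = topspace X \<and> X closure_of B = topspace X)"

definition openly_irresolvable :: "'a topology \<Rightarrow> bool" where
  "openly_irresolvable X \<longleftrightarrow>
     (\<forall>U. openin X U \<and> U \<noteq> {} \<longrightarrow> irresolvable (subtopology X U))"

end

theory Submission
  imports Defs
begin

lemma tsem_sub: "(\<And>p. V p \<subseteq> S) \<Longrightarrow> (\<And>A. D A \<subseteq> S) \<Longrightarrow> tsem S D V \<phi> \<subseteq> S"
  by (induct \<phi>) auto

lemma Md_iff: "M_d_valid X \<longleftrightarrow> (\<forall>A. A \<subseteq> topspace X \<longrightarrow>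
   topspace X - X derived_set_of (topspace X - X derived_set_of A) \<subseteq>
   X derived_set_of (topspace X - X derived_set_of (topspace X - A)))"
proof
  assume H: "M_d_valid X"
  show "\<forall>A. A \<subseteq> topspace X \<longrightarrow> topspace X - X derived_set_of (topspace X - X derived_set_of A) \<subseteq>
   X derived_set_of (topspace X - X derived_set_of (topspace X - A))"
  proof (intro allI impI)
    fix A assume A: "A \<subseteq> topspace X"
    have "valuation X (\<lambda>_. A)" using A by (simp add: valuation_def)
    then have "d_sem X (\<lambda>_. A) (McKinsey (Var 0)) = topspace X" using H by (simp add: M_d_valid_def)
    then show "topspace X - X derived_set_of (topspace X - X derived_set_of A) \<subseteq>
   X derived_set_of (topspace X - X derived_set_of (topspace X - A))"
      by (auto simp: d_sem_def McKinsey_def Box_def)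
  qed
next
  assume H: "\<forall>A. A \<subseteq> topspace X \<longrightarrow> topspace X - X derived_set_of (topspace X - X derived_set_of A) \<subseteq>
   X derived_set_of (topspace X - X derived_set_of (topspace X - A))"
  show "M_d_valid X" unfolding M_d_valid_def
  proof (intro allI impI)
    fix V \<phi> assume v: "valuation X V"
    let ?A = "d_sem X V \<phi>"
    have A: "?A \<subseteq> topspace X" unfolding d_sem_def
      apply (rule tsem_sub) using v apply (simp add: valuation_def) apply (simp add: derived_set_of_subset_topspace) done
    show "d_sem X V (McKinsey \<phi>) = topspace X"
      using H[rule_format, OF A] derived_set_of_subset_topspace[of X]
      by (auto simp: d_sem_def McKinsey_def Box_def)
  qed
qed

lemma MC_iff: "M_C_valid X \<longleftrightarrow> (\<forall>A. A \<subseteq> topspace X \<longrightarrow>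
   topspace X - X closure_of (topspace X - X closure_of A) \<subseteq>
   X closure_of (topspace X - X closure_of (topspace X - A)))"
proof
  assume H: "M_C_valid X"
  show "\<forall>A. A \<subseteq> topspace X \<longrightarrow> topspace X - X closure_of (topspace X - X closure_of A) \<subseteq>
   X closure_of (topspace X - X closure_of (topspace X - A))"
  proof (intro allI impI)
    fix A assume A: "A \<subseteq> topspace X"
    have "valuation X (\<lambda>_. A)" using A by (simp add: valuation_def)
    then have "C_sem X (\<lambda>_. A) (McKinsey (Var 0)) = topspace X" using H by (simp add: M_C_valid_def)
    then show "topspace X - X closure_of (topspace X - X closure_of A) \<subseteq>
   X closure_of (topspace X - X closure_of (topspace X - A))"
      by (auto simp: C_sem_def McKinsey_def Box_def)
  qed
next
  assume H: "\<forall>A. A \<subseteq> topspace X \<longrightarrow> topspace X - X closure_of (topspace X - X closure_of A) \<subseteq>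
   X closure_of (topspace X - X closure_of (topspace X - A))"
  show "M_C_valid X" unfolding M_C_valid_def
  proof (intro allI impI)
    fix V \<phi> assume v: "valuation X V"
    let ?A = "C_sem X V \<phi>"
    have A: "?A \<subseteq> topspace X" unfolding C_sem_def
      apply (rule tsem_sub) using v apply (simp add: valuation_def) apply (simp add: closure_of_subset_topspace) done
    show "C_sem X V (McKinsey \<phi>) = topspace X"
      using H[rule_format, OF A] closure_of_subset_topspace[of X]
      by (auto simp: C_sem_def McKinsey_def Box_def)
  qed
qed

definition dn :: "'a topology \<Rightarrow> 'a set \<Rightarrow> 'a set \<Rightarrow> bool" where
  "dn X U A \<longleftrightarrow> (\<forall>V. openin X V \<and> V \<noteq> {} \<and> V \<subseteq> U \<longrightarrow> V \<inter> A \<noteq> {})"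

lemma dense_sub:
  assumes U: "openin X U" and A: "A \<subseteq> U"
  shows "subtopology X U closure_of A = topspace (subtopology X U) \<longleftrightarrow> dn X U A"
proof -
  have UX: "U \<subseteq> topspace X" using U openin_subset by blast
  have e1: "topspace (subtopology X U) = U" using UX by auto
  have e2: "subtopology X U closure_of A = U \<inter> X closure_of A"
    using closure_of_subtopology_open U by blast
  have "U \<subseteq> X closure_of A \<longleftrightarrow> dn X U A"
  proof
    assume h: "U \<subseteq> X closure_of A"
    show "dn X U A" unfolding dn_def
    proof (intro allI impI)
      fix V assume V: "openin X V \<and> V \<noteq> {} \<and> V \<subseteq> U"
      then obtain v where "v \<in> V" by blast
      then have "v \<in> X closure_of A" using h V by blast
      then show "V \<inter> A \<noteq> {}" using V \<open>v \<in> V\<close> by (auto simp: in_closure_of)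
    qed
  next
    assume h: "dn X U A"
    show "U \<subseteq> X closure_of A"
    proof
      fix u assume u: "u \<in> U"
      show "u \<in> X closure_of A" unfolding in_closure_of
      proof (intro conjI allI impI)
        show "u \<in> topspace X" using u UX by blast
        fix T assume T: "u \<in> T \<and> openin X T"
        have "openin X (T \<inter> U) \<and> T \<inter> U \<noteq> {} \<and> T \<inter> U \<subseteq> U" using T U u by auto
        then have "T \<inter> U \<inter> A \<noteq> {}" using h unfolding dn_def by blast
        then show "\<exists>y. y \<in> A \<and> y \<in> T" by blast
      qed
    qed
  qed
  then show ?thesis using e1 e2 by auto
qed

lemma OI_iff: "openly_irresolvable X \<longleftrightarrow>
  (\<forall>U A B. openin X U \<and> A \<subseteq> U \<and> B \<subseteq> U \<and> A \<inter> B = {} \<and> A \<noteq> {} \<and> B \<noteq> {} \<and> dn X U A \<longrightarrow> \<not> dn X U B)"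
proof -
  have "irresolvable (subtopology X U) \<longleftrightarrow>
     (\<forall>A B. A \<subseteq> U \<and> B \<subseteq> U \<and> A \<inter> B = {} \<and> A \<noteq> {} \<and> B \<noteq> {} \<and> dn X U A \<longrightarrow> \<not> dn X U B)"
    if U: "openin X U" for U
  proof -
    have e1: "topspace (subtopology X U) = U" using U openin_subset by auto
    have d: "\<And>A. A \<subseteq> U \<Longrightarrow> (subtopology X U closure_of A = U \<longleftrightarrow> dn X U A)"
      using dense_sub[OF U] e1 by simp
    show ?thesis unfolding irresolvable_def e1
    proof
      assume h: "\<not> (\<exists>A B. A \<subseteq> U \<and> B \<subseteq> U \<and> A \<inter> B = {} \<and> A \<noteq> {} \<and> B \<noteq> {} \<and>
          subtopology X U closure_of A = U \<and> subtopology X U closure_of B = U)"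
      show "\<forall>A B. A \<subseteq> U \<and> B \<subseteq> U \<and> A \<inter> B = {} \<and> A \<noteq> {} \<and> B \<noteq> {} \<and> dn X U A \<longrightarrow> \<not> dn X U B"
      proof (intro allI impI notI)
        fix A B assume a: "A \<subseteq> U \<and> B \<subseteq> U \<and> A \<inter> B = {} \<and> A \<noteq> {} \<and> B \<noteq> {} \<and> dn X U A" and b: "dn X U B"
        then have "subtopology X U closure_of A = U" "subtopology X U closure_of B = U" using d by auto
        then show False using h a by blast
      qed
    next
      assume h: "\<forall>A B. A \<subseteq> U \<and> B \<subseteq> U \<and> A \<inter> B = {} \<and> A \<noteq> {} \<and> B \<noteq> {} \<and> dn X U A \<longrightarrow> \<not> dn X U B"
      show "\<not> (\<exists>A B. A \<subseteq> U \<and> B \<subseteq> U \<and> A \<inter> B = {} \<and> A \<noteq> {} \<and> B \<noteq> {} \<and>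
          subtopology X U closure_of A = U \<and> subtopology X U closure_of B = U)"
      proof
        assume "\<exists>A B. A \<subseteq> U \<and> B \<subseteq> U \<and> A \<inter> B = {} \<and> A \<noteq> {} \<and> B \<noteq> {} \<and>
          subtopology X U closure_of A = U \<and> subtopology X U closure_of B = U"
        then obtain A B where a: "A \<subseteq> U \<and> B \<subseteq> U \<and> A \<inter> B = {} \<and> A \<noteq> {} \<and> B \<noteq> {} \<and>
          subtopology X U closure_of A = U \<and> subtopology X U closure_of B = U" by blast
        then have "dn X U A" "dn X U B" using d by auto
        then show False using h a by blast
      qed
    qed
  qed
  note I = this
  show ?thesis unfolding openly_irresolvable_def
  proof (intro iffI allI impI)
    fix U A B
    assume h: "\<forall>U. openin X U \<and> U \<noteq> {} \<longrightarrow> irresolvable (subtopology X U)"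
      and a: "openin X U \<and> A \<subseteq> U \<and> B \<subseteq> U \<and> A \<inter> B = {} \<and> A \<noteq> {} \<and> B \<noteq> {} \<and> dn X U A"
    then have "U \<noteq> {}" by blast
    then have "irresolvable (subtopology X U)" using h a by blast
    then have "\<forall>A B. A \<subseteq> U \<and> B \<subseteq> U \<and> A \<inter> B = {} \<and> A \<noteq> {} \<and> B \<noteq> {} \<and> dn X U A \<longrightarrow> \<not> dn X U B"
      using I a by blast
    then show "\<not> dn X U B" using a by blast
  next
    fix U
    assume h: "\<forall>U A B. openin X U \<and> A \<subseteq> U \<and> B \<subseteq> U \<and> A \<inter> B = {} \<and> A \<noteq> {} \<and> B \<noteq> {} \<and> dn X U A \<longrightarrow> \<not> dn X U B"
      and u: "openin X U \<and> U \<noteq> {}"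
    then have "\<forall>A B. A \<subseteq> U \<and> B \<subseteq> U \<and> A \<inter> B = {} \<and> A \<noteq> {} \<and> B \<noteq> {} \<and> dn X U A \<longrightarrow> \<not> dn X U B"
      by blast
    then show "irresolvable (subtopology X U)" using I u by blast
  qed
qed

lemma punct:
  assumes TD: "T_D X" and cr: "crowded X" and W: "openin X W" and x: "x \<in> W"
  shows "openin X (W - X closure_of {x}) \<and> W - X closure_of {x} \<noteq> {}"
proof
  show "openin X (W - X closure_of {x})" using W by (simp add: openin_diff)
  have xs: "x \<in> topspace X" using W x openin_subset by blast
  have o2: "openin X (W - X derived_set_of {x})"
    using TD xs W by (simp add: T_D_def openin_diff)
  have xn: "x \<notin> X derived_set_of {x}" by (auto simp: in_derived_set_of)
  show "W - X closure_of {x} \<noteq> {}"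
  proof
    assume "W - X closure_of {x} = {}"
    then have "W - X derived_set_of {x} = {x}" using x xn by (auto simp: closure_of)
    then show False using o2 cr xs by (simp add: crowded_def)
  qed
qed

lemma xcl: "x \<in> topspace X \<Longrightarrow> x \<in> X closure_of {x}"
  by (auto simp: closure_of)

lemma dense_derived:
  assumes TD: "T_D X" and cr: "crowded X" and U: "openin X U" and h: "dn X U A"
  shows "U \<subseteq> X derived_set_of A"
proof
  fix y assume y: "y \<in> U"
  have ys: "y \<in> topspace X" using U y openin_subset by blast
  show "y \<in> X derived_set_of A" unfolding in_derived_set_of
  proof (intro conjI allI impI)
    show "y \<in> topspace X" by (fact ys)
    fix T assume T: "y \<in> T \<and> openin X T"
    have "openin X (T \<inter> U) \<and> y \<in> T \<inter> U" using T U y by auto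
    then have p: "openin X (T \<inter> U - X closure_of {y}) \<and> T \<inter> U - X closure_of {y} \<noteq> {}"
      using punct[OF TD cr] by blast
    then have "(T \<inter> U - X closure_of {y}) \<inter> A \<noteq> {}" using h unfolding dn_def by blast
    then obtain z where "z \<in> T" "z \<in> A" "z \<notin> X closure_of {y}" by blast
    then show "\<exists>z. z \<noteq> y \<and> z \<in> A \<and> z \<in> T" using xcl[OF ys] by metis
  qed
qed

lemma Md_crowded:
  assumes H: "M_d_valid X" shows "crowded X"
  unfolding crowded_def
proof (intro ballI notI)
  fix x assume x: "x \<in> topspace X" and o: "openin X {x}"
  have "x \<notin> X derived_set_of (topspace X - X derived_set_of {})"
    using o by (auto simp: in_derived_set_of)
  then have "x \<in> X derived_set_of (topspace X - X derived_set_of (topspace X - {}))"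
    using H[unfolded Md_iff, rule_format, of "{}"] x by auto
  then show False using o by (auto simp: in_derived_set_of)
qed

lemma notin_derivedE: "x \<in> topspace X \<Longrightarrow> x \<notin> X derived_set_of S \<Longrightarrow>
  \<exists>T. x \<in> T \<and> openin X T \<and> (\<forall>y\<in>T. y \<noteq> x \<longrightarrow> y \<notin> S)"
  by (auto simp: in_derived_set_of)

lemma in_derivedD: "x \<in> X derived_set_of S \<Longrightarrow> x \<in> T \<Longrightarrow> openin X T \<Longrightarrow>
  \<exists>y. y \<noteq> x \<and> y \<in> S \<and> y \<in> T"
  by (auto simp: in_derived_set_of)

lemma notin_closureE: "x \<in> topspace X \<Longrightarrow> x \<notin> X closure_of S \<Longrightarrow>
  \<exists>T. x \<in> T \<and> openin X T \<and> (\<forall>y\<in>T. y \<notin> S)"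
  by (auto simp: in_closure_of)

lemma in_closureD: "x \<in> X closure_of S \<Longrightarrow> x \<in> T \<Longrightarrow> openin X T \<Longrightarrow>
  \<exists>y. y \<in> S \<and> y \<in> T"
  by (auto simp: in_closure_of)

lemma Md_OI:
  assumes TD: "T_D X" and H: "M_d_valid X" shows "openly_irresolvable X"
  unfolding OI_iff
proof (intro allI impI notI)
  fix U A B assume h: "openin X U \<and> A \<subseteq> U \<and> B \<subseteq> U \<and> A \<inter> B = {} \<and> A \<noteq> {} \<and> B \<noteq> {} \<and> dn X U A"
    and dB: "dn X U B"
  have hU: "openin X U" and hA: "A \<subseteq> U" and hAB: "A \<inter> B = {}" and hne: "A \<noteq> {}" and dA: "dn X U A"
    using h by auto
  have cr: "crowded X" using H by (rule Md_crowded)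
  have UX: "U \<subseteq> topspace X" using hU openin_subset by blast
  obtain x where x: "x \<in> A" using hne by blast
  have xU: "x \<in> U" using x hA by blast
  have xS: "x \<in> topspace X" using xU UX by blast
  have AS: "A \<subseteq> topspace X" using hA UX by blast
  have Ud: "U \<subseteq> X derived_set_of A" using dense_derived[OF TD cr hU dA] .
  have "x \<notin> X derived_set_of (topspace X - X derived_set_of A)"
  proof
    assume "x \<in> X derived_set_of (topspace X - X derived_set_of A)"
    from in_derivedD[OF this xU hU] obtain y where "y \<in> topspace X - X derived_set_of A" "y \<in> U" by blast
    then show False using Ud by blast
  qed
  then have "x \<in> topspace X - X derived_set_of (topspace X - X derived_set_of A)" using xS by blast
  then have "x \<in> X derived_set_of (topspace X - X derived_set_of (topspace X - A))"
    using H[unfolded Md_iff, rule_format, OF AS] by blast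
  from in_derivedD[OF this xU hU] obtain y where
    y: "y \<in> U" "y \<in> topspace X" "y \<notin> X derived_set_of (topspace X - A)" by blast
  from notin_derivedE[OF y(2) y(3)] obtain G where
    G: "y \<in> G" "openin X G" "\<forall>z\<in>G. z \<noteq> y \<longrightarrow> z \<notin> topspace X - A" by blast
  have "openin X (G \<inter> U)" "y \<in> G \<inter> U" using G hU y by auto
  then have p: "openin X (G \<inter> U - X closure_of {y}) \<and> G \<inter> U - X closure_of {y} \<noteq> {}"
    using punct[OF TD cr] by blast
  have "G \<inter> U - X closure_of {y} \<subseteq> U" by blast
  then have "(G \<inter> U - X closure_of {y}) \<inter> B \<noteq> {}" using dB p unfolding dn_def by blast
  then obtain z where z: "z \<in> G" "z \<in> B" "z \<notin> X closure_of {y}" "z \<in> U" by blast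
  have "z \<noteq> y" using z(3) xcl[OF y(2)] by metis
  then have "z \<in> A" using G z UX by blast
  then show False using z hAB by blast
qed

lemma OI_Md:
  assumes TD: "T_D X" and cr: "crowded X" and H: "openly_irresolvable X" shows "M_d_valid X"
  unfolding Md_iff
proof (intro allI impI subsetI)
  fix A x assume A: "A \<subseteq> topspace X"
    and x: "x \<in> topspace X - X derived_set_of (topspace X - X derived_set_of A)"
  have xS: "x \<in> topspace X" using x by blast
  have xn0: "x \<notin> X derived_set_of (topspace X - X derived_set_of A)" using x by blast
  from notin_derivedE[OF xS xn0] obtain U where
    U: "x \<in> U" "openin X U" "\<forall>y\<in>U. y \<noteq> x \<longrightarrow> y \<notin> topspace X - X derived_set_of A" by blast
  have UX: "U \<subseteq> topspace X" using U(2) openin_subset by blast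
  have Ud: "\<And>y. y \<noteq> x \<Longrightarrow> y \<in> U \<Longrightarrow> y \<in> X derived_set_of A" using U(3) UX by blast
  show "x \<in> X derived_set_of (topspace X - X derived_set_of (topspace X - A))"
    unfolding in_derived_set_of
  proof (intro conjI allI impI)
    show "x \<in> topspace X" by (fact xS)
    fix T assume T: "x \<in> T \<and> openin X T"
    define U' where "U' = U \<inter> T - X closure_of {x}"
    have "openin X (U \<inter> T)" "x \<in> U \<inter> T" using T U by auto
    then have p: "openin X U' \<and> U' \<noteq> {}" unfolding U'_def using punct[OF TD cr] by blast
    have pU: "openin X U'" and pne: "U' \<noteq> {}" using p by auto
    have U'X: "U' \<subseteq> topspace X" using pU openin_subset by blast
    have xn: "x \<notin> U'" unfolding U'_def using xcl[OF xS] by blast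
    have U'U: "U' \<subseteq> U" "U' \<subseteq> T" unfolding U'_def by auto
    have dA: "dn X U' (A \<inter> U')" unfolding dn_def
    proof (intro allI impI)
      fix V assume V: "openin X V \<and> V \<noteq> {} \<and> V \<subseteq> U'"
      then obtain v where v: "v \<in> V" by blast
      have "v \<noteq> x" "v \<in> U" using V v xn U'U by auto
      then have "v \<in> X derived_set_of A" using Ud by blast
      from in_derivedD[OF this v] V obtain w where "w \<in> A" "w \<in> V" by blast
      then show "V \<inter> (A \<inter> U') \<noteq> {}" using V by blast
    qed
    show "\<exists>y. y \<noteq> x \<and> y \<in> topspace X - X derived_set_of (topspace X - A) \<and> y \<in> T"
    proof (rule ccontr)
      assume nn: "\<not> ?thesis"
      have all: "y \<in> X derived_set_of (topspace X - A)" if y: "y \<in> U'" for y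
      proof -
        have "y \<noteq> x" "y \<in> topspace X" "y \<in> T" using y xn U'X U'U by auto
        then show ?thesis using nn by blast
      qed
      have dB: "dn X U' (U' - A)" unfolding dn_def
      proof (intro allI impI)
        fix V assume V: "openin X V \<and> V \<noteq> {} \<and> V \<subseteq> U'"
        then obtain v where v: "v \<in> V" by blast
        then have "v \<in> X derived_set_of (topspace X - A)" using all V by blast
        from in_derivedD[OF this v] V obtain w where "w \<notin> A" "w \<in> V" by blast
        then show "V \<inter> (U' - A) \<noteq> {}" using V by blast
      qed
      have "A \<inter> U' \<noteq> {}" using dA pU pne unfolding dn_def by blast
      moreover have "U' - A \<noteq> {}" using dB pU pne unfolding dn_def by blast
      moreover have "A \<inter> U' \<subseteq> U'" "U' - A \<subseteq> U'" "(A \<inter> U') \<inter> (U' - A) = {}" by auto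
      ultimately show False using H[unfolded OI_iff, rule_format, of U' "A \<inter> U'" "U' - A"] pU dA dB
        by blast
    qed
  qed
qed

lemma OI_MC:
  assumes H: "openly_irresolvable X" shows "M_C_valid X"
  unfolding MC_iff
proof (intro allI impI subsetI)
  fix A x assume A: "A \<subseteq> topspace X"
    and x: "x \<in> topspace X - X closure_of (topspace X - X closure_of A)"
  have xS: "x \<in> topspace X" using x by blast
  have xn0: "x \<notin> X closure_of (topspace X - X closure_of A)" using x by blast
  from notin_closureE[OF xS xn0] obtain U where
    U: "x \<in> U" "openin X U" "\<forall>y\<in>U. y \<notin> topspace X - X closure_of A" by blast
  have UX: "U \<subseteq> topspace X" using U(2) openin_subset by blast
  have Uc: "\<And>y. y \<in> U \<Longrightarrow> y \<in> X closure_of A" using U(3) UX by blast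
  show "x \<in> X closure_of (topspace X - X closure_of (topspace X - A))"
    unfolding in_closure_of
  proof (intro conjI allI impI)
    show "x \<in> topspace X" by (fact xS)
    fix T assume T: "x \<in> T \<and> openin X T"
    define U' where "U' = U \<inter> T"
    have pU: "openin X U'" and pne: "U' \<noteq> {}" using T U unfolding U'_def by auto
    have U'X: "U' \<subseteq> topspace X" using pU openin_subset by blast
    have U'U: "U' \<subseteq> U" "U' \<subseteq> T" unfolding U'_def by auto
    have dA: "dn X U' (A \<inter> U')" unfolding dn_def
    proof (intro allI impI)
      fix V assume V: "openin X V \<and> V \<noteq> {} \<and> V \<subseteq> U'"
      then obtain v where v: "v \<in> V" by blast
      have "v \<in> U" using V v U'U by auto
      then have "v \<in> X closure_of A" using Uc by blast
      from in_closureD[OF this v] V obtain w where "w \<in> A" "w \<in> V" by blast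
      then show "V \<inter> (A \<inter> U') \<noteq> {}" using V by blast
    qed
    show "\<exists>y. y \<in> topspace X - X closure_of (topspace X - A) \<and> y \<in> T"
    proof (rule ccontr)
      assume nn: "\<not> ?thesis"
      have all: "y \<in> X closure_of (topspace X - A)" if y: "y \<in> U'" for y
      proof -
        have "y \<in> topspace X" "y \<in> T" using y U'X U'U by auto
        then show ?thesis using nn by blast
      qed
      have dB: "dn X U' (U' - A)" unfolding dn_def
      proof (intro allI impI)
        fix V assume V: "openin X V \<and> V \<noteq> {} \<and> V \<subseteq> U'"
        then obtain v where v: "v \<in> V" by blast
        then have "v \<in> X closure_of (topspace X - A)" using all V by blast
        from in_closureD[OF this v] V obtain w where "w \<notin> A" "w \<in> V" by blast
        then show "V \<inter> (U' - A) \<noteq> {}" using V by blast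
      qed
      have "A \<inter> U' \<noteq> {}" using dA pU pne unfolding dn_def by blast
      moreover have "U' - A \<noteq> {}" using dB pU pne unfolding dn_def by blast
      moreover have "A \<inter> U' \<subseteq> U'" "U' - A \<subseteq> U'" "(A \<inter> U') \<inter> (U' - A) = {}" by auto
      ultimately show False using H[unfolded OI_iff, rule_format, of U' "A \<inter> U'" "U' - A"] pU dA dB
        by blast
    qed
  qed
qed

lemma MC_OI:
  assumes H: "M_C_valid X" shows "openly_irresolvable X"
  unfolding OI_iff
proof (intro allI impI notI)
  fix U A B assume h: "openin X U \<and> A \<subseteq> U \<and> B \<subseteq> U \<and> A \<inter> B = {} \<and> A \<noteq> {} \<and> B \<noteq> {} \<and> dn X U A"
    and dB: "dn X U B"
  have hU: "openin X U" and hA: "A \<subseteq> U" and hAB: "A \<inter> B = {}" and hne: "A \<noteq> {}" and dA: "dn X U A"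
    using h by auto
  have UX: "U \<subseteq> topspace X" using hU openin_subset by blast
  obtain x where x: "x \<in> A" using hne by blast
  have xU: "x \<in> U" using x hA by blast
  have xS: "x \<in> topspace X" using xU UX by blast
  have AS: "A \<subseteq> topspace X" using hA UX by blast
  have "subtopology X U closure_of A = topspace (subtopology X U)"
    using dense_sub[OF hU hA] dA by blast
  moreover have "topspace (subtopology X U) = U" using UX by auto
  moreover have "subtopology X U closure_of A = U \<inter> X closure_of A"
    using closure_of_subtopology_open hU by blast
  ultimately have Uc: "U \<subseteq> X closure_of A" by auto
  have "x \<notin> X closure_of (topspace X - X closure_of A)"
  proof
    assume "x \<in> X closure_of (topspace X - X closure_of A)"
    from in_closureD[OF this xU hU] obtain y where "y \<in> topspace X - X closure_of A" "y \<in> U" by blast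
    then show False using Uc by blast
  qed
  then have "x \<in> topspace X - X closure_of (topspace X - X closure_of A)" using xS by blast
  then have "x \<in> X closure_of (topspace X - X closure_of (topspace X - A))"
    using H[unfolded MC_iff, rule_format, OF AS] by blast
  from in_closureD[OF this xU hU] obtain y where
    y: "y \<in> U" "y \<in> topspace X" "y \<notin> X closure_of (topspace X - A)" by blast
  from notin_closureE[OF y(2) y(3)] obtain G where
    G: "y \<in> G" "openin X G" "\<forall>z\<in>G. z \<notin> topspace X - A" by blast
  have "openin X (G \<inter> U)" "G \<inter> U \<noteq> {}" "G \<inter> U \<subseteq> U" using G hU y by auto
  then have "(G \<inter> U) \<inter> B \<noteq> {}" using dB unfolding dn_def by blast
  then obtain z where z: "z \<in> G" "z \<in> B" "z \<in> U" by blast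
  then have "z \<in> A" using G UX by blast
  then show False using z hAB by blast
qed

theorem corollary1:
  fixes X :: "'a topology"
  assumes "T_D X"
  shows "(M_d_valid X \<longleftrightarrow> crowded X \<and> openly_irresolvable X) \<and>
         (crowded X \<longrightarrow>
            (M_d_valid X \<longleftrightarrow> openly_irresolvable X) \<and>
            (openly_irresolvable X \<longleftrightarrow> M_C_valid X))"
  using Md_crowded Md_OI[OF assms] OI_Md[OF assms] OI_MC MC_OI by blast

end
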